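(* For every $n\ge1$: if $\pi\in\mathfrak{S}_n(312)$ then $\mathsf{adi}\,\pi=(2\text{-}13)\pi$; and if $\pi\in\mathfrak{S}_n(231)$ then $\mathsf{adi}^*\,\pi=(13\text{-}2)\pi$.
   Context: $\mathfrak{S}_n(\tau)$: permutations of $[n]$ avoiding the classical pattern $\tau$. $(2\text{-}13)\pi=\#\{(i,j):j<i<n,\ \pi(i)<\pi(j)<\pi(i+1)\}$; $(13\text{-}2)\pi=\#\{(i,j):i+1<j\le n,\ \pi(i)<\pi(j)<\pi(i+1)\}$. Admissible inversions: set $\pi(n+1)=0$; an inversion pair $(\pi(i),\pi(j))$ ($1\le i<j\le n$, $\pi(i)>\pi(j)$) is admissible if $\pi(j)<\pi(j+1)$ or there is $l$ with $i<l<j$ and $\pi(l)<\pi(j)$; $\mathsf{adi}\,\pi$ counts them. Star admissible: set $\pi(0)=n+1$; an inversion pair $(\pi(i),\pi(j))$ with $i<j$ is star admissible if $\pi(i-1)<\pi(i)$ or there is $l$ with $i<l<j$ and $\pi(l)>\pi(i)$; $\mathsf{adi}^*\,\pi$ counts them. *)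

theory Defs
  imports "HOL-Combinatorics.Permutations"
begin

text \<open>Permutations of [n] are functions nat => nat that permute {1..n}
  (so pi i = i outside {1..n}). A classical pattern tau of length k is a
  permutation of {1..k}.\<close>

definition contains_pattern :: "(nat \<Rightarrow> nat) \<Rightarrow> nat \<Rightarrow> (nat \<Rightarrow> nat) \<Rightarrow> nat \<Rightarrow> bool" where
  "contains_pattern p n tau k \<longleftrightarrow>
     (\<exists>idx :: nat \<Rightarrow> nat. strict_mono_on {1..k} idx \<and> idx ` {1..k} \<subseteq> {1..n} \<and>
        (\<forall>a\<in>{1..k}. \<forall>b\<in>{1..k}. p (idx a) < p (idx b) \<longleftrightarrow> tau a < tau b))"

definition avoids :: "(nat \<Rightarrow> nat) \<Rightarrow> nat \<Rightarrow> (nat \<Rightarrow> nat) \<Rightarrow> nat \<Rightarrow> bool" where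
  "avoids p n tau k \<longleftrightarrow> \<not> contains_pattern p n tau k"

definition av_perms :: "nat \<Rightarrow> (nat \<Rightarrow> nat) \<Rightarrow> nat \<Rightarrow> (nat \<Rightarrow> nat) set" where
  "av_perms n tau k = {p. p permutes {1..n} \<and> avoids p n tau k}"

definition pat312 :: "nat \<Rightarrow> nat" where
  "pat312 i = (if i = 1 then 3 else if i = 2 then 1 else if i = 3 then 2 else i)"

definition pat231 :: "nat \<Rightarrow> nat" where
  "pat231 i = (if i = 1 then 2 else if i = 2 then 3 else if i = 3 then 1 else i)"

definition st_2_13 :: "(nat \<Rightarrow> nat) \<Rightarrow> nat \<Rightarrow> nat" where
  "st_2_13 p n = card {(i, j). 1 \<le> j \<and> j < i \<and> i < n \<and> p i < p j \<and> p j < p (i + 1)}"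

definition st_13_2 :: "(nat \<Rightarrow> nat) \<Rightarrow> nat \<Rightarrow> nat" where
  "st_13_2 p n = card {(i, j). 1 \<le> i \<and> i + 1 < j \<and> j \<le> n \<and> p i < p j \<and> p j < p (i + 1)}"

definition ext_end :: "(nat \<Rightarrow> nat) \<Rightarrow> nat \<Rightarrow> nat \<Rightarrow> nat" where
  "ext_end p n i = (if i = n + 1 then 0 else p i)"

definition ext_start :: "(nat \<Rightarrow> nat) \<Rightarrow> nat \<Rightarrow> nat \<Rightarrow> nat" where
  "ext_start p n i = (if i = 0 then n + 1 else p i)"

definition adi :: "(nat \<Rightarrow> nat) \<Rightarrow> nat \<Rightarrow> nat" where
  "adi p n = card {(i, j). 1 \<le> i \<and> i < j \<and> j \<le> n \<and> p i > p j \<and>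
      (ext_end p n j < ext_end p n (j + 1) \<or> (\<exists>l. i < l \<and> l < j \<and> p l < p j))}"

definition adi_star :: "(nat \<Rightarrow> nat) \<Rightarrow> nat \<Rightarrow> nat" where
  "adi_star p n = card {(i, j). 1 \<le> i \<and> i < j \<and> j \<le> n \<and> p i > p j \<and>
      (ext_start p n (i - 1) < ext_start p n i \<or> (\<exists>l. i < l \<and> l < j \<and> p l > p i))}"

end

theory Submission
  imports Defs
begin

lemma c312:
  assumes "1 \<le> a" "a < b" "b < c" "c \<le> n" "p b < p c" "p c < p a"
  shows "contains_pattern p n pat312 3"
proof -
  let ?f = "\<lambda>k::nat. if k = 1 then a else if k = 2 then b else c"
  have e: "{1..3::nat} = {1,2,3}" by auto
  show ?thesis unfolding contains_pattern_def
    apply (rule exI[of _ ?f])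
    using assms by (auto simp: e strict_mono_on_def pat312_def)
qed

lemma c231:
  assumes "1 \<le> a" "a < b" "b < c" "c \<le> n" "p c < p a" "p a < p b"
  shows "contains_pattern p n pat231 3"
proof -
  let ?f = "\<lambda>k::nat. if k = 1 then a else if k = 2 then b else c"
  have e: "{1..3::nat} = {1,2,3}" by auto
  show ?thesis unfolding contains_pattern_def
    apply (rule exI[of _ ?f])
    using assms by (auto simp: e strict_mono_on_def pat231_def)
qed

lemma part1:
  assumes "p \<in> av_perms n pat312 3"
  shows "adi p n = st_2_13 p n"
proof -
  have pp: "p permutes {1..n}" and nc: "\<not> contains_pattern p n pat312 3"
    using assms by (auto simp: av_perms_def avoids_def)
  have inj: "\<And>x y. p x = p y \<Longrightarrow> x = y" using pp by (meson permutes_inj injD)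
  have h: "\<And>a b c. 1 \<le> a \<Longrightarrow> a < b \<Longrightarrow> b < c \<Longrightarrow> c \<le> n \<Longrightarrow> p b < p c \<Longrightarrow> p c < p a \<Longrightarrow> False"
    using c312 nc by blast
  define A where "A = {(i, j). 1 \<le> i \<and> i < j \<and> j \<le> n \<and> p i > p j \<and>
      (ext_end p n j < ext_end p n (j + 1) \<or> (\<exists>l. i < l \<and> l < j \<and> p l < p j))}"
  define S where "S = {(i, j). 1 \<le> j \<and> j < i \<and> i < n \<and> p i < p j \<and> p j < p (i + 1)}"
  have "A = prod.swap ` S"
  proof (rule set_eqI, case_tac x, simp)
    fix x i j
    show "((i, j) \<in> A) = ((j, i) \<in> S)"
    proof
      assume a: "(i, j) \<in> A"
      hence b: "1 \<le> i" "i < j" "j \<le> n" "p j < p i" by (auto simp: A_def)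
      have "ext_end p n j < ext_end p n (j + 1)"
      proof (rule ccontr)
        assume "\<not> ?thesis"
        then obtain l where "i < l" "l < j" "p l < p j" using a by (auto simp: A_def)
        thus False using h[of i l j] b by auto
      qed
      hence jn: "j < n" and pj: "p j < p (j+1)" using b by (auto simp: ext_end_def split: if_splits)
      have "p i \<noteq> p (j+1)" using inj b by force
      moreover have "\<not> p (j+1) < p i" using h[of i j "j+1"] b jn pj by auto
      ultimately show "(j, i) \<in> S" using b jn by (auto simp: S_def)
    next
      assume "(j, i) \<in> S"
      thus "(i, j) \<in> A" by (auto simp: S_def A_def ext_end_def)
    qed
  qed
  hence "card A = card S" by (simp add: card_image)
  thus ?thesis by (simp add: A_def S_def adi_def st_2_13_def)
qed

lemma part2:
  assumes "p \<in> av_perms n pat231 3"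
  shows "adi_star p n = st_13_2 p n"
proof -
  have pp: "p permutes {1..n}" and nc: "\<not> contains_pattern p n pat231 3"
    using assms by (auto simp: av_perms_def avoids_def)
  have inj: "\<And>x y. p x = p y \<Longrightarrow> x = y" using pp by (meson permutes_inj injD)
  have img: "\<And>x. x \<in> {1..n} \<Longrightarrow> p x \<in> {1..n}" using permutes_in_image[OF pp] by metis
  have h: "\<And>a b c. 1 \<le> a \<Longrightarrow> a < b \<Longrightarrow> b < c \<Longrightarrow> c \<le> n \<Longrightarrow> p c < p a \<Longrightarrow> p a < p b \<Longrightarrow> False"
    using c231 nc by blast
  define A where "A = {(i, j). 1 \<le> i \<and> i < j \<and> j \<le> n \<and> p i > p j \<and>
      (ext_start p n (i - 1) < ext_start p n i \<or> (\<exists>l. i < l \<and> l < j \<and> p l > p i))}"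
  define S where "S = {(i, j). 1 \<le> i \<and> i + 1 < j \<and> j \<le> n \<and> p i < p j \<and> p j < p (i + 1)}"
  have key: "((i, j) \<in> A) = ((i, j) \<in> (\<lambda>(i,j). (i+1, j)) ` S)" for i j
    proof
      assume a: "(i, j) \<in> A"
      hence b: "1 \<le> i" "i < j" "j \<le> n" "p j < p i" by (auto simp: A_def)
      have "ext_start p n (i - 1) < ext_start p n i"
      proof (rule ccontr)
        assume "\<not> ?thesis"
        then obtain l where "i < l" "l < j" "p l > p i" using a by (auto simp: A_def)
        thus False using h[of i l j] b by auto
      qed
      moreover have "p i \<le> n" using img[of i] b by auto
      ultimately have i2: "i \<ge> 2" and pj: "p (i-1) < p i" using b
        by (auto simp: ext_start_def split: if_splits)
      have "p (i-1) \<noteq> p j" using inj b i2 by force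
      moreover have "\<not> p j < p (i-1)"
      proof
        assume "p j < p (i-1)"
        moreover have "1 \<le> i - 1" "i - 1 < i" using i2 by auto
        ultimately show False using h[of "i-1" i j] b pj by blast
      qed
      ultimately have "(i-1, j) \<in> S" using b i2 by (auto simp: S_def)
      moreover have "(i,j) = (\<lambda>(i,j). (i+1, j)) (i-1, j)" using i2 by auto
      ultimately show "(i, j) \<in> (\<lambda>(i,j). (i+1, j)) ` S" by blast
    next
      assume "(i, j) \<in> (\<lambda>(i,j). (i+1, j)) ` S"
      thus "(i, j) \<in> A" by (auto simp: S_def A_def ext_start_def)
    qed
  have "A = (\<lambda>(i,j). (i+1, j)) ` S"
    apply (rule set_eqI)
    subgoal for x using key[of "fst x" "snd x"] by simp
    done
  moreover have "inj_on (\<lambda>(i,j). (i+1::nat, j::nat)) S" by (auto simp: inj_on_def)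
  ultimately have "card A = card S" by (simp add: card_image)
  thus ?thesis by (simp add: A_def S_def adi_star_def st_13_2_def)
qed

theorem lemma3p4:
  fixes n :: nat
  assumes "n \<ge> 1"
  shows "(\<forall>p \<in> av_perms n pat312 3. adi p n = st_2_13 p n) \<and>
         (\<forall>p \<in> av_perms n pat231 3. adi_star p n = st_13_2 p n)"
  using part1 part2 by blast

end
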